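(* Let $\mathcal{C}$ be a small category and $k$ a field. Then the trivial module $\underline{k}$ is a direct summand of $\mathrm{Res}_\tau(k\mathcal{C})$ as $kF(\mathcal{C})$-modules; i.e. $\mathrm{Res}_\tau(k\mathcal{C})\cong\underline{k}\oplus N_{\mathcal{C}}$ for some $kF(\mathcal{C})$-module $N_{\mathcal{C}}$.
   Context: Modules over a category algebra are identified with covariant functors to $\mathrm{Vect}_k$; $\underline{k}$ is the constant functor with value $k$. $\mathcal{C}^e=\mathcal{C}\times\mathcal{C}^{op}$, and $k\mathcal{C}$ is the functor $\mathcal{C}^e\to\mathrm{Vect}_k$ with $k\mathcal{C}(x,y)=k\mathrm{Hom}_{\mathcal{C}}(y,x)$ (zero if empty), $(u,v^{op})$ acting by $\alpha\mapsto u\alpha v$. The category of factorizations $F(\mathcal{C})$ has objects $[\alpha]$, $\alpha\in\mathrm{Mor}\,\mathcal{C}$; for $\alpha:y\to x$, $\alpha':y'\to x'$ a morphism $[\alpha]\to[\alpha']$ is a pair $(u,v^{op})$ with $u:x\to x'$, $v:y'\to y$ and $\alpha'=u\alpha v$. $\tau:F(\mathcal{C})\to\mathcal{C}^e$ sends $[\alpha]\mapsto(x,y)$ and $(u,v^{op})\mapsto(u,v^{op})$, and $\mathrm{Res}_\tau$ is precomposition with $\tau$. *)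

theory Defs
  imports Main "HOL-Library.Function_Algebras"
begin

text \<open>A (small) category: a set of objects, a set of arrows, domain/codomain,
identities and composition.  Comp g f is "g after f" (defined when Cod f = Dom g).\<close>

record ('o, 'a) cat =
  Obj  :: "'o set"
  Arr  :: "'a set"
  Dom  :: "'a \<Rightarrow> 'o"
  Cod  :: "'a \<Rightarrow> 'o"
  Idt  :: "'o \<Rightarrow> 'a"
  Comp :: "'a \<Rightarrow> 'a \<Rightarrow> 'a"

definition category :: "('o, 'a, 'z) cat_scheme \<Rightarrow> bool" where
  "category C \<longleftrightarrow>
     (\<forall>f\<in>Arr C. Dom C f \<in> Obj C \<and> Cod C f \<in> Obj C) \<and>
     (\<forall>x\<in>Obj C. Idt C x \<in> Arr C \<and> Dom C (Idt C x) = x \<and> Cod C (Idt C x) = x) \<and>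
     (\<forall>f\<in>Arr C. \<forall>g\<in>Arr C. Cod C f = Dom C g \<longrightarrow>
        Comp C g f \<in> Arr C \<and> Dom C (Comp C g f) = Dom C f \<and> Cod C (Comp C g f) = Cod C g) \<and>
     (\<forall>f\<in>Arr C. Comp C f (Idt C (Dom C f)) = f \<and> Comp C (Idt C (Cod C f)) f = f) \<and>
     (\<forall>f\<in>Arr C. \<forall>g\<in>Arr C. \<forall>h\<in>Arr C. Cod C f = Dom C g \<longrightarrow> Cod C g = Dom C h \<longrightarrow>
        Comp C h (Comp C g f) = Comp C (Comp C h g) f)"

definition Hom :: "('o, 'a, 'z) cat_scheme \<Rightarrow> 'o \<Rightarrow> 'o \<Rightarrow> 'a set" where
  "Hom C y x = {f \<in> Arr C. Dom C f = y \<and> Cod C f = x}"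

text \<open>Objects: the morphisms \<alpha> of C (written [\<alpha>]).  A morphism [\<alpha>] \<rightarrow> [\<alpha>'] for
  \<alpha> : y \<rightarrow> x, \<alpha>' : y' \<rightarrow> x' is a pair (u, v^op) with u : x \<rightarrow> x', v : y' \<rightarrow> y and
  \<alpha>' = u \<alpha> v.  We encode such a morphism as the triple (\<alpha>, u, v); its target
  [u \<alpha> v] is determined by the triple.\<close>

definition fact_target :: "('o, 'a, 'z) cat_scheme \<Rightarrow> 'a \<times> 'a \<times> 'a \<Rightarrow> 'a" where
  "fact_target C t = (case t of (\<alpha>, u, v) \<Rightarrow> Comp C u (Comp C \<alpha> v))"

definition FC :: "('o, 'a, 'z) cat_scheme \<Rightarrow> ('a, 'a \<times> 'a \<times> 'a) cat" where
  "FC C = \<lparr> Obj = Arr C,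
            Arr = {(\<alpha>, u, v). \<alpha> \<in> Arr C \<and> u \<in> Arr C \<and> v \<in> Arr C \<and>
                               Dom C u = Cod C \<alpha> \<and> Cod C v = Dom C \<alpha>},
            Dom = (\<lambda>(\<alpha>, u, v). \<alpha>),
            Cod = fact_target C,
            Idt = (\<lambda>\<alpha>. (\<alpha>, Idt C (Cod C \<alpha>), Idt C (Dom C \<alpha>))),
            Comp = (\<lambda>(\<alpha>', u', v') (\<alpha>, u, v). (\<alpha>, Comp C u' u, Comp C v v')) \<rparr>"

text \<open>Vector spaces over the field 'k are realised as subspaces of an ambient
  abelian group 'v with scalar multiplication sc.\<close>

definition subspace_on :: "('k::field \<Rightarrow> 'v::ab_group_add \<Rightarrow> 'v) \<Rightarrow> 'v set \<Rightarrow> bool" where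
  "subspace_on sc V \<longleftrightarrow> 0 \<in> V \<and> (\<forall>x\<in>V. \<forall>y\<in>V. x + y \<in> V) \<and> (\<forall>c. \<forall>x\<in>V. sc c x \<in> V)"

definition linear_on :: "('k::field \<Rightarrow> 'v::ab_group_add \<Rightarrow> 'v) \<Rightarrow> ('k \<Rightarrow> 'w::ab_group_add \<Rightarrow> 'w)
    \<Rightarrow> 'v set \<Rightarrow> ('v \<Rightarrow> 'w) \<Rightarrow> bool" where
  "linear_on sc1 sc2 V f \<longleftrightarrow> (\<forall>x\<in>V. \<forall>y\<in>V. f (x + y) = f x + f y) \<and>
                              (\<forall>c. \<forall>x\<in>V. f (sc1 c x) = sc2 c (f x))"

text \<open>A module over kD (D a small category): a functor D \<rightarrow> Vect_k, given by a
  vector space Mob X for each object X and a linear map Mar f for each arrow f.\<close>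

definition cat_module :: "('o, 'm, 'z) cat_scheme \<Rightarrow> ('k::field \<Rightarrow> 'v::ab_group_add \<Rightarrow> 'v)
    \<Rightarrow> ('o \<Rightarrow> 'v set) \<Rightarrow> ('m \<Rightarrow> 'v \<Rightarrow> 'v) \<Rightarrow> bool" where
  "cat_module D sc Mob Mar \<longleftrightarrow>
     (\<forall>X\<in>Obj D. subspace_on sc (Mob X)) \<and>
     (\<forall>f\<in>Arr D. (\<forall>m\<in>Mob (Dom D f). Mar f m \<in> Mob (Cod D f)) \<and> linear_on sc sc (Mob (Dom D f)) (Mar f)) \<and>
     (\<forall>X\<in>Obj D. \<forall>m\<in>Mob X. Mar (Idt D X) m = m) \<and>
     (\<forall>f\<in>Arr D. \<forall>g\<in>Arr D. Cod D f = Dom D g \<longrightarrow>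
        (\<forall>m\<in>Mob (Dom D f). Mar (Comp D g f) m = Mar g (Mar f m)))"

definition triv_ob :: "'o \<Rightarrow> 'k::field set" where "triv_ob X = UNIV"
definition triv_ar :: "'m \<Rightarrow> 'k::field \<Rightarrow> 'k" where "triv_ar f = id"

definition fsc :: "'k::field \<Rightarrow> ('a \<Rightarrow> 'k) \<Rightarrow> ('a \<Rightarrow> 'k)" where
  "fsc c f = (\<lambda>a. c * f a)"

text \<open>At [\<alpha>] with \<alpha> : y \<rightarrow> x its value is kC(x,y) = k Hom(y,x),
  realised as finitely supported functions Hom(y,x) \<rightarrow> k (zero outside).  The
  morphism (u, v^op) acts by the linear extension of \<beta> \<mapsto> u \<beta> v.\<close>

definition kC_ob :: "('o, 'a, 'z) cat_scheme \<Rightarrow> 'a \<Rightarrow> ('a \<Rightarrow> 'k::field) set" where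
  "kC_ob C \<alpha> = {f. finite {\<beta>. f \<beta> \<noteq> 0} \<and> {\<beta>. f \<beta> \<noteq> 0} \<subseteq> Hom C (Dom C \<alpha>) (Cod C \<alpha>)}"

definition kC_ar :: "('o, 'a, 'z) cat_scheme \<Rightarrow> 'a \<times> 'a \<times> 'a \<Rightarrow> ('a \<Rightarrow> 'k::field) \<Rightarrow> ('a \<Rightarrow> 'k)" where
  "kC_ar C t f = (case t of (\<alpha>, u, v) \<Rightarrow>
      (\<lambda>\<gamma>. \<Sum>\<beta>\<in>{\<beta>. f \<beta> \<noteq> 0 \<and> Comp C u (Comp C \<beta> v) = \<gamma>}. f \<beta>))"

text \<open>M \<cong> k \<oplus> N as kD-modules for some kD-module N (realised in the same ambient
  type as M): a natural isomorphism m \<mapsto> (\<epsilon> m, \<psi> m) from M to the direct sum of the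
  trivial module and N, spelled out componentwise.\<close>

definition iso_triv_plus :: "('o, 'm, 'z) cat_scheme \<Rightarrow> ('k::field \<Rightarrow> 'v::ab_group_add \<Rightarrow> 'v)
    \<Rightarrow> ('o \<Rightarrow> 'v set) \<Rightarrow> ('m \<Rightarrow> 'v \<Rightarrow> 'v) \<Rightarrow> ('o \<Rightarrow> 'v set) \<Rightarrow> ('m \<Rightarrow> 'v \<Rightarrow> 'v) \<Rightarrow> bool" where
  "iso_triv_plus D sc Mob Mar Nob Nar \<longleftrightarrow>
     (\<exists>\<epsilon> \<psi>.
       (\<forall>X\<in>Obj D. linear_on sc (*) (Mob X) (\<epsilon> X) \<and> linear_on sc sc (Mob X) (\<psi> X) \<and>
                   bij_betw (\<lambda>m. (\<epsilon> X m, \<psi> X m)) (Mob X) (triv_ob X \<times> Nob X)) \<and>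
       (\<forall>f\<in>Arr D. \<forall>m\<in>Mob (Dom D f).
          \<epsilon> (Cod D f) (Mar f m) = triv_ar f (\<epsilon> (Dom D f) m) \<and>
          \<psi> (Cod D f) (Mar f m) = Nar f (\<psi> (Dom D f) m)))"

end

theory Submission
  imports Defs
begin

definition supp :: "('a \<Rightarrow> 'k::zero) \<Rightarrow> 'a set" where "supp f = {\<beta>. f \<beta> \<noteq> 0}"
definition Stot :: "('a \<Rightarrow> 'k::field) \<Rightarrow> 'k" where "Stot f = (\<Sum>\<beta>\<in>supp f. f \<beta>)"

lemma Stot_alt: "finite A \<Longrightarrow> supp f \<subseteq> A \<Longrightarrow> Stot f = sum f A"
  unfolding Stot_def supp_def by (rule sum.mono_neutral_left) auto

lemma kC_ar_alt:
  assumes "finite A" "supp f \<subseteq> A"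
  shows "kC_ar C (\<alpha>,u,v) f \<gamma> = (\<Sum>\<beta>\<in>{\<beta>\<in>A. Comp C u (Comp C \<beta> v) = \<gamma>}. f \<beta>)"
  unfolding kC_ar_def using assms unfolding supp_def
  by (auto intro!: sum.mono_neutral_left)

lemma supp_kC_ar: "supp (kC_ar C (\<alpha>,u,v) f) \<subseteq> (\<lambda>\<beta>. Comp C u (Comp C \<beta> v)) ` supp f"
proof
  fix \<gamma> assume "\<gamma> \<in> supp (kC_ar C (\<alpha>,u,v) f)"
  then have "{\<beta>. f \<beta> \<noteq> 0 \<and> Comp C u (Comp C \<beta> v) = \<gamma>} \<noteq> {}"
    unfolding supp_def kC_ar_def by (auto simp del: Collect_empty_eq)
  then show "\<gamma> \<in> (\<lambda>\<beta>. Comp C u (Comp C \<beta> v)) ` supp f" unfolding supp_def by blast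
qed

lemma supp_add: "supp (f + g :: _ \<Rightarrow> _::monoid_add) \<subseteq> supp f \<union> supp g"
  unfolding supp_def by auto
lemma supp_fsc: "supp (fsc c f) \<subseteq> supp f"
  unfolding supp_def fsc_def by auto
lemma supp_zero[simp]: "supp 0 = {}" unfolding supp_def by auto

lemma kC_ar_add:
  assumes "finite (supp f)" "finite (supp g)"
  shows "kC_ar C (\<alpha>,u,v) (f + g) = kC_ar C (\<alpha>,u,v) f + kC_ar C (\<alpha>,u,v) g"
proof
  fix \<gamma>
  let ?A = "supp f \<union> supp g"
  have "kC_ar C (\<alpha>,u,v) (f + g) \<gamma> = (\<Sum>\<beta>\<in>{\<beta>\<in>?A. Comp C u (Comp C \<beta> v) = \<gamma>}. (f+g) \<beta>)"
    using assms supp_add[of f g] by (intro kC_ar_alt) auto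
  also have "\<dots> = kC_ar C (\<alpha>,u,v) f \<gamma> + kC_ar C (\<alpha>,u,v) g \<gamma>"
    using assms by (simp add: sum.distrib kC_ar_alt[of ?A])
  finally show "kC_ar C (\<alpha>,u,v) (f + g) \<gamma> = (kC_ar C (\<alpha>,u,v) f + kC_ar C (\<alpha>,u,v) g) \<gamma>" by simp
qed

lemma kC_ar_fsc:
  assumes "finite (supp f)"
  shows "kC_ar C (\<alpha>,u,v) (fsc c f) = fsc c (kC_ar C (\<alpha>,u,v) f)"
proof
  fix \<gamma>
  have "kC_ar C (\<alpha>,u,v) (fsc c f) \<gamma> = (\<Sum>\<beta>\<in>{\<beta>\<in>supp f. Comp C u (Comp C \<beta> v) = \<gamma>}. fsc c f \<beta>)"
    using assms supp_fsc[of c f] by (intro kC_ar_alt) auto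
  also have "\<dots> = fsc c (kC_ar C (\<alpha>,u,v) f) \<gamma>"
    using assms by (simp add: fsc_def sum_distrib_left kC_ar_alt[of "supp f"])
  finally show "kC_ar C (\<alpha>,u,v) (fsc c f) \<gamma> = fsc c (kC_ar C (\<alpha>,u,v) f) \<gamma>" .
qed

lemma Stot_kC_ar:
  assumes "finite (supp f)"
  shows "Stot (kC_ar C (\<alpha>,u,v) f) = Stot f"
proof -
  let ?h = "\<lambda>\<beta>. Comp C u (Comp C \<beta> v)"
  have "Stot (kC_ar C (\<alpha>,u,v) f) = (\<Sum>\<gamma>\<in>?h ` supp f. kC_ar C (\<alpha>,u,v) f \<gamma>)"
    using assms supp_kC_ar[of C \<alpha> u v f] by (intro Stot_alt) auto
  also have "\<dots> = (\<Sum>\<gamma>\<in>?h ` supp f. \<Sum>\<beta>\<in>{\<beta>\<in>supp f. ?h \<beta> = \<gamma>}. f \<beta>)"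
    using assms by (simp add: kC_ar_alt[of "supp f"])
  also have "\<dots> = sum f (supp f)"
    using sum.image_gen[OF assms, of f ?h] by simp
  also have "\<dots> = Stot f" by (simp add: Stot_def)
  finally show ?thesis .
qed

lemma kC_ar_comp_gen:
  assumes fin: "finite (supp f)"
    and eq: "\<forall>\<beta>\<in>supp f. Comp C u' (Comp C (Comp C u (Comp C \<beta> v)) v') = Comp C u2 (Comp C \<beta> v2)"
  shows "kC_ar C (\<alpha>, u2, v2) f = kC_ar C (\<alpha>', u', v') (kC_ar C (\<alpha>,u,v) f)"
proof
  fix \<gamma>
  let ?h = "\<lambda>\<beta>. Comp C u (Comp C \<beta> v)"
  let ?h' = "\<lambda>\<delta>. Comp C u' (Comp C \<delta> v')"
  let ?S = "supp f"
  let ?T = "{\<beta>\<in>?S. ?h' (?h \<beta>) = \<gamma>}"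
  have "kC_ar C (\<alpha>, u2, v2) f \<gamma> = (\<Sum>\<beta>\<in>{\<beta>\<in>?S. Comp C u2 (Comp C \<beta> v2) = \<gamma>}. f \<beta>)"
    using fin by (intro kC_ar_alt) auto
  also have "{\<beta>\<in>?S. Comp C u2 (Comp C \<beta> v2) = \<gamma>} = ?T" using eq by auto
  also have "sum f ?T = (\<Sum>\<delta>\<in>?h ` ?T. sum f {\<beta>\<in>?T. ?h \<beta> = \<delta>})"
    using fin by (intro sum.image_gen) auto
  also have "\<dots> = (\<Sum>\<delta>\<in>{\<delta>\<in>?h ` ?S. ?h' \<delta> = \<gamma>}. sum f {\<beta>\<in>?S. ?h \<beta> = \<delta>})"
  proof (rule sum.cong)
    show "?h ` ?T = {\<delta>\<in>?h ` ?S. ?h' \<delta> = \<gamma>}" by auto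
  next
    fix \<delta> assume "\<delta> \<in> {\<delta>\<in>?h ` ?S. ?h' \<delta> = \<gamma>}"
    then have "{\<beta>\<in>?T. ?h \<beta> = \<delta>} = {\<beta>\<in>?S. ?h \<beta> = \<delta>}" by auto
    then show "sum f {\<beta>\<in>?T. ?h \<beta> = \<delta>} = sum f {\<beta>\<in>?S. ?h \<beta> = \<delta>}" by simp
  qed
  also have "\<dots> = (\<Sum>\<delta>\<in>{\<delta>\<in>?h ` ?S. ?h' \<delta> = \<gamma>}. kC_ar C (\<alpha>,u,v) f \<delta>)"
    using fin by (simp add: kC_ar_alt[of ?S])
  also have "\<dots> = kC_ar C (\<alpha>', u', v') (kC_ar C (\<alpha>,u,v) f) \<gamma>"
    using fin supp_kC_ar[of C \<alpha> u v f] by (intro kC_ar_alt[symmetric]) auto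
  finally show "kC_ar C (\<alpha>, u2, v2) f \<gamma> = kC_ar C (\<alpha>', u', v') (kC_ar C (\<alpha>,u,v) f) \<gamma>" .
qed


lemma supp_diff: "supp (f - g :: _ \<Rightarrow> _::group_add) \<subseteq> supp f \<union> supp g"
  unfolding supp_def by auto

lemma kC_ar_diff:
  assumes "finite (supp f)" "finite (supp g)"
  shows "kC_ar C (\<alpha>,u,v) (f - g) = kC_ar C (\<alpha>,u,v) f - kC_ar C (\<alpha>,u,v) g"
proof -
  have "finite (supp (f - g))" using assms supp_diff[of f g] finite_subset by blast
  then have "kC_ar C (\<alpha>,u,v) ((f - g) + g) = kC_ar C (\<alpha>,u,v) (f - g) + kC_ar C (\<alpha>,u,v) g"
    using assms by (intro kC_ar_add)
  then show ?thesis by (simp add: eq_diff_eq)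
qed

lemma Stot_add:
  assumes "finite (supp f)" "finite (supp g)"
  shows "Stot (f + g) = Stot f + Stot g"
proof -
  let ?A = "supp f \<union> supp g"
  have "Stot (f + g) = sum (f + g) ?A" using assms supp_add[of f g] by (intro Stot_alt) auto
  also have "\<dots> = sum f ?A + sum g ?A" by (simp add: sum.distrib)
  also have "\<dots> = Stot f + Stot g" using assms by (simp add: Stot_alt[of ?A])
  finally show ?thesis .
qed

lemma Stot_diff:
  assumes "finite (supp f)" "finite (supp g)"
  shows "Stot (f - g) = Stot f - Stot g"
proof -
  have "finite (supp (f - g))" using assms supp_diff[of f g] finite_subset by blast
  then have "Stot ((f - g) + g) = Stot (f - g) + Stot g" using assms by (intro Stot_add)
  then show ?thesis by (simp add: eq_diff_eq)
qed

lemma Stot_fsc: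
  assumes "finite (supp f)"
  shows "Stot (fsc c f) = c * Stot f"
proof -
  have "Stot (fsc c f) = sum (fsc c f) (supp f)" using assms supp_fsc[of c f] by (intro Stot_alt) auto
  also have "\<dots> = c * Stot f" by (simp add: fsc_def Stot_def sum_distrib_left)
  finally show ?thesis .
qed

lemma comp_ok:
  assumes "category C" "f \<in> Arr C" "g \<in> Arr C" "Cod C f = Dom C g"
  shows "Comp C g f \<in> Arr C \<and> Dom C (Comp C g f) = Dom C f \<and> Cod C (Comp C g f) = Cod C g"
  using assms unfolding category_def by blast

lemma assoc:
  assumes "category C" "f \<in> Arr C" "g \<in> Arr C" "h \<in> Arr C" "Cod C f = Dom C g" "Cod C g = Dom C h"
  shows "Comp C h (Comp C g f) = Comp C (Comp C h g) f"
  using assms unfolding category_def by blast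

lemma idt_ok:
  assumes "category C" "x \<in> Obj C"
  shows "Idt C x \<in> Arr C \<and> Dom C (Idt C x) = x \<and> Cod C (Idt C x) = x"
  using assms unfolding category_def by blast

lemma dc_ok:
  assumes "category C" "f \<in> Arr C"
  shows "Dom C f \<in> Obj C \<and> Cod C f \<in> Obj C"
  using assms unfolding category_def by blast

lemma id_laws:
  assumes "category C" "f \<in> Arr C"
  shows "Comp C f (Idt C (Dom C f)) = f \<and> Comp C (Idt C (Cod C f)) f = f"
  using assms unfolding category_def by blast

lemma phi_hom:
  assumes "category C" "u \<in> Arr C" "v \<in> Arr C" "Dom C u = y" "Cod C v = x" "\<beta> \<in> Hom C x y"
  shows "Comp C u (Comp C \<beta> v) \<in> Hom C (Dom C v) (Cod C u)"
proof -
  have b: "\<beta> \<in> Arr C" "Dom C \<beta> = x" "Cod C \<beta> = y" using assms(6) unfolding Hom_def by auto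
  have 1: "Comp C \<beta> v \<in> Arr C \<and> Dom C (Comp C \<beta> v) = Dom C v \<and> Cod C (Comp C \<beta> v) = y"
    using comp_ok[OF assms(1) assms(3) b(1)] assms b by auto
  have 2: "Comp C u (Comp C \<beta> v) \<in> Arr C \<and> Dom C (Comp C u (Comp C \<beta> v)) = Dom C v \<and> Cod C (Comp C u (Comp C \<beta> v)) = Cod C u"
    using comp_ok[OF assms(1) _ assms(2)] 1 assms by auto
  then show ?thesis unfolding Hom_def by auto
qed

lemma FC_simps:
  "Obj (FC C) = Arr C"
  "Arr (FC C) = {(\<alpha>, u, v). \<alpha> \<in> Arr C \<and> u \<in> Arr C \<and> v \<in> Arr C \<and> Dom C u = Cod C \<alpha> \<and> Cod C v = Dom C \<alpha>}"
  "Dom (FC C) (\<alpha>, u, v) = \<alpha>"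
  "Cod (FC C) (\<alpha>, u, v) = Comp C u (Comp C \<alpha> v)"
  "Idt (FC C) \<alpha> = (\<alpha>, Idt C (Cod C \<alpha>), Idt C (Dom C \<alpha>))"
  "Comp (FC C) (\<alpha>', u', v') (\<alpha>, u, v) = (\<alpha>, Comp C u' u, Comp C v v')"
  by (simp_all add: FC_def fact_target_def)

lemma self_hom: "\<alpha> \<in> Arr C \<Longrightarrow> \<alpha> \<in> Hom C (Dom C \<alpha>) (Cod C \<alpha>)"
  unfolding Hom_def by auto

lemma target_ok:
  assumes "category C" "\<alpha> \<in> Arr C" "u \<in> Arr C" "v \<in> Arr C" "Dom C u = Cod C \<alpha>" "Cod C v = Dom C \<alpha>"
  shows "Comp C u (Comp C \<alpha> v) \<in> Arr C \<and> Dom C (Comp C u (Comp C \<alpha> v)) = Dom C v \<and> Cod C (Comp C u (Comp C \<alpha> v)) = Cod C u"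
  using phi_hom[OF assms(1,3,4,5,6) self_hom[OF assms(2)]] unfolding Hom_def by auto

lemma kC_obD: "f \<in> kC_ob C \<alpha> \<Longrightarrow> finite (supp f) \<and> supp f \<subseteq> Hom C (Dom C \<alpha>) (Cod C \<alpha>)"
  unfolding kC_ob_def supp_def by auto

lemma kC_obI: "finite (supp f) \<Longrightarrow> supp f \<subseteq> Hom C (Dom C \<alpha>) (Cod C \<alpha>) \<Longrightarrow> f \<in> kC_ob C \<alpha>"
  unfolding kC_ob_def supp_def by auto

lemma kC_ar_maps:
  assumes "category C" "\<alpha> \<in> Arr C" "u \<in> Arr C" "v \<in> Arr C" "Dom C u = Cod C \<alpha>" "Cod C v = Dom C \<alpha>"
    and "f \<in> kC_ob C \<alpha>"
  shows "kC_ar C (\<alpha>,u,v) f \<in> kC_ob C (Comp C u (Comp C \<alpha> v))"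
proof (rule kC_obI)
  have f: "finite (supp f)" "supp f \<subseteq> Hom C (Dom C \<alpha>) (Cod C \<alpha>)" using kC_obD[OF assms(7)] by auto
  show "finite (supp (kC_ar C (\<alpha>, u, v) f))" using f supp_kC_ar[of C \<alpha> u v f] finite_subset by blast
  have t: "Dom C (Comp C u (Comp C \<alpha> v)) = Dom C v" "Cod C (Comp C u (Comp C \<alpha> v)) = Cod C u"
    using target_ok[OF assms(1-6)] by auto
  show "supp (kC_ar C (\<alpha>, u, v) f) \<subseteq> Hom C (Dom C (Comp C u (Comp C \<alpha> v))) (Cod C (Comp C u (Comp C \<alpha> v)))"
    unfolding t using supp_kC_ar[of C \<alpha> u v f] f phi_hom[OF assms(1,3,4,5,6)] by blast
qed

lemma kC_ar_id:
  assumes "category C" "\<alpha> \<in> Arr C" "f \<in> kC_ob C \<alpha>"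
  shows "kC_ar C (\<alpha>, Idt C (Cod C \<alpha>), Idt C (Dom C \<alpha>)) f = f"
proof
  fix \<gamma>
  have f: "finite (supp f)" "supp f \<subseteq> Hom C (Dom C \<alpha>) (Cod C \<alpha>)" using kC_obD[OF assms(3)] by auto
  have e: "Comp C (Idt C (Cod C \<alpha>)) (Comp C \<beta> (Idt C (Dom C \<alpha>))) = \<beta>" if "\<beta> \<in> supp f" for \<beta>
  proof -
    have b: "\<beta> \<in> Arr C" "Dom C \<beta> = Dom C \<alpha>" "Cod C \<beta> = Cod C \<alpha>" using that f unfolding Hom_def by auto
    then show ?thesis using id_laws[OF assms(1) b(1)] by simp
  qed
  have "kC_ar C (\<alpha>, Idt C (Cod C \<alpha>), Idt C (Dom C \<alpha>)) f \<gamma> = sum f {\<beta>\<in>supp f. \<beta> = \<gamma>}"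
  proof -
    have "{\<beta>\<in>supp f. Comp C (Idt C (Cod C \<alpha>)) (Comp C \<beta> (Idt C (Dom C \<alpha>))) = \<gamma>} = {\<beta>\<in>supp f. \<beta> = \<gamma>}"
      using e by auto
    then show ?thesis using kC_ar_alt[OF f(1) order_refl, of C \<alpha> "Idt C (Cod C \<alpha>)" "Idt C (Dom C \<alpha>)" \<gamma>] by simp
  qed
  also have "\<dots> = f \<gamma>"
  proof (cases "\<gamma> \<in> supp f")
    case True
    then have "{\<beta>\<in>supp f. \<beta> = \<gamma>} = {\<gamma>}" by auto
    then show ?thesis by simp
  next
    case False
    then have "{\<beta>\<in>supp f. \<beta> = \<gamma>} = {}" by auto
    then show ?thesis using False by (simp add: supp_def)
  qed
  finally show "kC_ar C (\<alpha>, Idt C (Cod C \<alpha>), Idt C (Dom C \<alpha>)) f \<gamma> = f \<gamma>" .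
qed

lemma kC_ar_comp:
  assumes cat: "category C" and a: "\<alpha> \<in> Arr C" "u \<in> Arr C" "v \<in> Arr C" "Dom C u = Cod C \<alpha>" "Cod C v = Dom C \<alpha>"
    and a': "u' \<in> Arr C" "v' \<in> Arr C" "Dom C u' = Cod C \<alpha>'" "Cod C v' = Dom C \<alpha>'"
    and t: "Comp C u (Comp C \<alpha> v) = \<alpha>'"
    and f: "f \<in> kC_ob C \<alpha>"
  shows "kC_ar C (\<alpha>, Comp C u' u, Comp C v v') f = kC_ar C (\<alpha>', u', v') (kC_ar C (\<alpha>,u,v) f)"
proof (rule kC_ar_comp_gen)
  have fs: "finite (supp f)" "supp f \<subseteq> Hom C (Dom C \<alpha>) (Cod C \<alpha>)" using kC_obD[OF f] by auto
  then show "finite (supp f)" by simp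
  have tt: "Dom C \<alpha>' = Dom C v" "Cod C \<alpha>' = Cod C u" using target_ok[OF cat a] t by auto
  show "\<forall>\<beta>\<in>supp f. Comp C u' (Comp C (Comp C u (Comp C \<beta> v)) v') = Comp C (Comp C u' u) (Comp C \<beta> (Comp C v v'))"
  proof
    fix \<beta> assume "\<beta> \<in> supp f"
    then have b: "\<beta> \<in> Arr C" "Dom C \<beta> = Dom C \<alpha>" "Cod C \<beta> = Cod C \<alpha>" using fs unfolding Hom_def by auto
    have x: "Comp C \<beta> v \<in> Arr C \<and> Dom C (Comp C \<beta> v) = Dom C v \<and> Cod C (Comp C \<beta> v) = Cod C \<alpha>"
      using comp_ok[OF cat a(3) b(1)] a b by auto
    have vv: "Comp C v v' \<in> Arr C \<and> Dom C (Comp C v v') = Dom C v' \<and> Cod C (Comp C v v') = Cod C v"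
      using comp_ok[OF cat a'(2) a(3)] a' tt by auto
    have "Comp C (Comp C u (Comp C \<beta> v)) v' = Comp C u (Comp C (Comp C \<beta> v) v')"
      using assoc[OF cat a'(2) _ a(2)] x a' a tt by auto
    also have "Comp C (Comp C \<beta> v) v' = Comp C \<beta> (Comp C v v')"
      using assoc[OF cat a'(2) a(3) b(1)] a' a b tt by auto
    finally have 1: "Comp C (Comp C u (Comp C \<beta> v)) v' = Comp C u (Comp C \<beta> (Comp C v v'))" .
    have y: "Comp C \<beta> (Comp C v v') \<in> Arr C \<and> Cod C (Comp C \<beta> (Comp C v v')) = Cod C \<alpha>"
      using comp_ok[OF cat _ b(1)] vv a b by auto
    show "Comp C u' (Comp C (Comp C u (Comp C \<beta> v)) v') = Comp C (Comp C u' u) (Comp C \<beta> (Comp C v v'))"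
      unfolding 1 using assoc[OF cat _ a(2) a'(1)] y a a' tt by auto
  qed
qed


lemma kC_sub: "subspace_on (fsc :: 'k::field \<Rightarrow> _) (kC_ob C \<alpha> :: ('a \<Rightarrow> 'k) set)"
  unfolding subspace_on_def
proof (intro conjI ballI allI)
  show "0 \<in> kC_ob C \<alpha>" by (rule kC_obI) auto
next
  fix x y :: "'a \<Rightarrow> 'k" assume "x \<in> kC_ob C \<alpha>" "y \<in> kC_ob C \<alpha>"
  then show "x + y \<in> kC_ob C \<alpha>" using kC_obD[of x C \<alpha>] kC_obD[of y C \<alpha>] supp_add[of x y]
    by (intro kC_obI) (auto intro: finite_subset)
next
  fix c :: 'k and x :: "'a \<Rightarrow> 'k" assume "x \<in> kC_ob C \<alpha>"
  then show "fsc c x \<in> kC_ob C \<alpha>" using kC_obD[of x C \<alpha>] supp_fsc[of c x]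
    by (intro kC_obI) (auto intro: finite_subset)
qed

lemma Stot_zero: "Stot 0 = 0" by (simp add: Stot_def)

definition dl :: "'a \<Rightarrow> 'a \<Rightarrow> 'k::field" where "dl \<alpha> = (\<lambda>\<beta>. if \<beta> = \<alpha> then 1 else 0)"

lemma supp_dl: "supp (dl \<alpha>) = {\<alpha>}" unfolding supp_def dl_def by auto

lemma dl_in: "\<alpha> \<in> Arr C \<Longrightarrow> dl \<alpha> \<in> kC_ob C \<alpha>"
  by (rule kC_obI) (auto simp: supp_dl Hom_def)

lemma Stot_dl: "Stot (dl \<alpha>) = 1"
  unfolding Stot_def supp_dl by (simp add: dl_def)

lemma kC_ar_dl: "kC_ar C (\<alpha>,u,v) (dl \<alpha>) = dl (Comp C u (Comp C \<alpha> v))"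
proof
  fix \<gamma>
  have "kC_ar C (\<alpha>,u,v) (dl \<alpha>) \<gamma> = sum (dl \<alpha>) {\<beta>\<in>{\<alpha>}. Comp C u (Comp C \<beta> v) = \<gamma>}"
    by (rule kC_ar_alt) (auto simp: supp_dl)
  also have "\<dots> = dl (Comp C u (Comp C \<alpha> v)) \<gamma>"
  proof (cases "Comp C u (Comp C \<alpha> v) = \<gamma>")
    case True
    then have "{\<beta>\<in>{\<alpha>}. Comp C u (Comp C \<beta> v) = \<gamma>} = {\<alpha>}" by auto
    then show ?thesis using True unfolding \<open>{\<beta>\<in>{\<alpha>}. Comp C u (Comp C \<beta> v) = \<gamma>} = {\<alpha>}\<close> by (simp add: dl_def)
  next
    case False
    then have "{\<beta>\<in>{\<alpha>}. Comp C u (Comp C \<beta> v) = \<gamma>} = {}" by auto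
    then show ?thesis using False unfolding \<open>{\<beta>\<in>{\<alpha>}. Comp C u (Comp C \<beta> v) = \<gamma>} = {}\<close> by (simp add: dl_def)
  qed
  finally show "kC_ar C (\<alpha>,u,v) (dl \<alpha>) \<gamma> = dl (Comp C u (Comp C \<alpha> v)) \<gamma>" .
qed

lemma fsc_distrib: "fsc (a + b) d = fsc a d + fsc b d" "fsc (a * b) d = fsc a (fsc b d)"
  by (auto simp: fsc_def fun_eq_iff algebra_simps)

lemma fsc_diff: "fsc c (f - g) = fsc c f - fsc c g"
  by (auto simp: fsc_def fun_eq_iff algebra_simps)

theorem lemma2p3p3:
  fixes C :: "('o, 'a) cat"
  assumes "category C"
  shows "\<exists>Nob Nar. cat_module (FC C) (fsc :: 'k::field \<Rightarrow> _) Nob Nar \<and>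
           iso_triv_plus (FC C) fsc (kC_ob C) (kC_ar C) Nob Nar"
proof -
  note cat = assms
  define Nob :: "'a \<Rightarrow> ('a \<Rightarrow> 'k) set" where "Nob = (\<lambda>\<alpha>. {f \<in> kC_ob C \<alpha>. Stot f = 0})"
  define \<psi> :: "'a \<Rightarrow> ('a \<Rightarrow> 'k) \<Rightarrow> ('a \<Rightarrow> 'k)" where "\<psi> = (\<lambda>\<alpha> f. f - fsc (Stot f) (dl \<alpha>))"
  have fin: "finite (supp f)" if "f \<in> kC_ob C \<alpha>" for f :: "'a \<Rightarrow> 'k" and \<alpha>
    using kC_obD[OF that] by simp
  have findl: "finite (supp (dl \<alpha> :: 'a \<Rightarrow> 'k))" for \<alpha> by (simp add: supp_dl)
  have modN: "cat_module (FC C) (fsc :: 'k \<Rightarrow> _) Nob (kC_ar C)"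
    unfolding cat_module_def
  proof (intro conjI ballI allI impI)
    fix X assume "X \<in> Obj (FC C)"
    show "subspace_on fsc (Nob X)"
      unfolding subspace_on_def Nob_def
      using kC_sub[of C X] unfolding subspace_on_def
      by (auto simp: Stot_add[OF fin fin] Stot_fsc[OF fin] Stot_zero)
  next
    fix t m assume t0: "t \<in> Arr (FC C)" and m: "m \<in> Nob (Dom (FC C) t)"
    from t0 obtain \<alpha> u v where t: "t = (\<alpha>,u,v)" and a: "\<alpha> \<in> Arr C" "u \<in> Arr C" "v \<in> Arr C" "Dom C u = Cod C \<alpha>" "Cod C v = Dom C \<alpha>"
      by (auto simp: FC_simps)
    show "kC_ar C t m \<in> Nob (Cod (FC C) t)"
      using m kC_ar_maps[OF cat a] fin unfolding t Nob_def FC_simps by (auto simp: Stot_kC_ar)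
  next
    fix t assume t0: "t \<in> Arr (FC C)"
    from t0 obtain \<alpha> u v where t: "t = (\<alpha>,u,v)" and a: "\<alpha> \<in> Arr C" "u \<in> Arr C" "v \<in> Arr C" "Dom C u = Cod C \<alpha>" "Cod C v = Dom C \<alpha>"
      by (auto simp: FC_simps)
    show "linear_on fsc fsc (Nob (Dom (FC C) t)) (kC_ar C t)"
      unfolding linear_on_def t FC_simps Nob_def by (auto simp: kC_ar_add[OF fin fin] kC_ar_fsc[OF fin])
  next
    fix X m assume "X \<in> Obj (FC C)" "m \<in> Nob X"
    then show "kC_ar C (Idt (FC C) X) m = m"
      using kC_ar_id[OF cat] unfolding Nob_def FC_simps by auto
  next
    fix f g m assume f: "f \<in> Arr (FC C)" and g: "g \<in> Arr (FC C)" and fg: "Cod (FC C) f = Dom (FC C) g"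
      and m: "m \<in> Nob (Dom (FC C) f)"
    obtain \<alpha> u v where ft: "f = (\<alpha>,u,v)" and a: "\<alpha> \<in> Arr C" "u \<in> Arr C" "v \<in> Arr C" "Dom C u = Cod C \<alpha>" "Cod C v = Dom C \<alpha>"
      using f by (auto simp: FC_simps)
    obtain \<alpha>' u' v' where gt: "g = (\<alpha>',u',v')" and a': "\<alpha>' \<in> Arr C" "u' \<in> Arr C" "v' \<in> Arr C" "Dom C u' = Cod C \<alpha>'" "Cod C v' = Dom C \<alpha>'"
      using g by (auto simp: FC_simps)
    have tt: "Comp C u (Comp C \<alpha> v) = \<alpha>'" using fg unfolding ft gt FC_simps .
    show "kC_ar C (Comp (FC C) g f) m = kC_ar C g (kC_ar C f m)"
      unfolding ft gt FC_simps
      by (rule kC_ar_comp[OF cat a a'(2-5) tt]) (use m in \<open>auto simp: ft Nob_def FC_simps\<close>)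
  qed
  have iso: "iso_triv_plus (FC C) fsc (kC_ob C) (kC_ar C) Nob (kC_ar C)"
    unfolding iso_triv_plus_def
  proof (intro exI[of _ "\<lambda>X. Stot"] exI[of _ \<psi>] conjI ballI)
    fix X assume X: "X \<in> Obj (FC C)"
    then have XA: "X \<in> Arr C" by (simp add: FC_simps)
    show "linear_on (fsc :: 'k \<Rightarrow> _) (*) (kC_ob C X) Stot"
      unfolding linear_on_def by (auto simp: Stot_add[OF fin fin] Stot_fsc[OF fin])
    show "linear_on fsc fsc (kC_ob C X) (\<psi> X)"
      unfolding linear_on_def \<psi>_def
      by (auto simp: Stot_add[OF fin fin] Stot_fsc[OF fin] fsc_distrib fsc_diff algebra_simps)
    have Sp: "Stot (\<psi> X m) = 0" if "m \<in> kC_ob C X" for m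
    proof -
      have f2: "finite (supp (fsc (Stot m) (dl X :: 'a \<Rightarrow> 'k)))"
        using supp_fsc[of "Stot m" "dl X"] findl[of X] finite_subset by blast
      show ?thesis unfolding \<psi>_def
        by (simp add: Stot_diff[OF fin[OF that] f2] Stot_fsc[OF findl] Stot_dl)
    qed
    have pin: "\<psi> X m \<in> kC_ob C X" if "m \<in> kC_ob C X" for m
    proof -
      have "fsc (Stot m) (dl X) \<in> kC_ob C X" using kC_sub[of C X] dl_in[OF XA]
        unfolding subspace_on_def by blast
      moreover have "fsc (-1) (fsc (Stot m) (dl X)) \<in> kC_ob C X" using calculation kC_sub[of C X]
        unfolding subspace_on_def by blast
      ultimately have "m + fsc (-1) (fsc (Stot m) (dl X)) \<in> kC_ob C X" using that kC_sub[of C X]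
        unfolding subspace_on_def by blast
      moreover have "m + fsc (-1) (fsc (Stot m) (dl X)) = \<psi> X m"
        unfolding \<psi>_def by (auto simp: fsc_def fun_eq_iff)
      ultimately show ?thesis by simp
    qed
    show "bij_betw (\<lambda>m. (Stot m, \<psi> X m)) (kC_ob C X) ((triv_ob X :: 'k set) \<times> Nob X)"
      unfolding bij_betw_def
    proof (intro conjI)
      show "inj_on (\<lambda>m. (Stot m, \<psi> X m)) (kC_ob C X)"
        by (rule inj_onI) (auto simp: \<psi>_def)
      show "(\<lambda>m. (Stot m, \<psi> X m)) ` kC_ob C X = (triv_ob X :: 'k set) \<times> Nob X"
      proof
        show "(\<lambda>m. (Stot m, \<psi> X m)) ` kC_ob C X \<subseteq> (triv_ob X :: 'k set) \<times> Nob X"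
          using Sp pin by (auto simp: triv_ob_def Nob_def)
      next
        show "(triv_ob X :: 'k set) \<times> Nob X \<subseteq> (\<lambda>m. (Stot m, \<psi> X m)) ` kC_ob C X"
        proof
          fix p assume "p \<in> (triv_ob X :: 'k set) \<times> Nob X"
          then obtain c :: 'k and n where p: "p = (c, n)" and n: "n \<in> kC_ob C X" "Stot n = 0"
            by (auto simp: Nob_def)
          let ?m = "n + fsc c (dl X)"
          have cd: "fsc c (dl X) \<in> kC_ob C X" using kC_sub[of C X] dl_in[OF XA]
            unfolding subspace_on_def by blast
          have mi: "?m \<in> kC_ob C X" using n cd kC_sub[of C X] unfolding subspace_on_def by blast
          have sm: "Stot ?m = c"
            by (simp add: Stot_add[OF fin[OF n(1)] fin[OF cd]] Stot_fsc[OF findl] Stot_dl n(2))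
          have "\<psi> X ?m = n" unfolding \<psi>_def sm by simp
          then show "p \<in> (\<lambda>m. (Stot m, \<psi> X m)) ` kC_ob C X"
            using mi sm p by (auto intro!: image_eqI[of _ _ ?m])
        qed
      qed
    qed
  next
    fix t and m :: "'a \<Rightarrow> 'k" assume t0: "t \<in> Arr (FC C)" and m0: "m \<in> kC_ob C (Dom (FC C) t)"
    obtain \<alpha> u v where t: "t = (\<alpha>,u,v)" and a: "\<alpha> \<in> Arr C" "u \<in> Arr C" "v \<in> Arr C" "Dom C u = Cod C \<alpha>" "Cod C v = Dom C \<alpha>"
      using t0 by (auto simp: FC_simps)
    have m: "m \<in> kC_ob C \<alpha>" using m0 by (simp add: t FC_simps)
    show "Stot (kC_ar C t m) = triv_ar t (Stot m)"
      by (simp add: t triv_ar_def Stot_kC_ar[OF fin[OF m]])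
    have cd: "finite (supp (fsc (Stot m) (dl \<alpha>)))" using supp_fsc[of "Stot m" "dl \<alpha>"] findl[of \<alpha>] finite_subset by blast
    show "\<psi> (Cod (FC C) t) (kC_ar C t m) = kC_ar C t (\<psi> (Dom (FC C) t) m)"
      unfolding t FC_simps \<psi>_def
      by (simp only: kC_ar_diff[OF fin[OF m] cd] kC_ar_fsc[OF findl] kC_ar_dl Stot_kC_ar[OF fin[OF m]])
  qed
  show ?thesis using modN iso by blast
qed

end
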